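(* Let $\mathbb G$ be a cyclic group (i.e., $\mathbb Z_n$ for some $n\ge1$, or $\mathbb Z$) with generator $1$, let $(\mathbf A,\mathbf A')$ be a promise template and $k\ge1$. The $\mathbb G$-affine $k$-consistency relaxation solves $\mathrm{PCSP}(\mathbf A,\mathbf A')$ if and only if the $k$-consistency reduction $\kappa_k^{\mathbf A,\mathbf G}$ is a reduction from $\mathrm{PCSP}(\mathbf A,\mathbf A')$ to $\mathrm{CSP}(\mathbf G)$.
   Context: Structures. A (multisorted relational) signature consists of types and relation symbols, each symbol $R$ having an arity $\mathrm{ar}_R$, a tuple of types. A structure $\mathbf A$ consists of a set $A_t$ per type and relations $R^{\mathbf A}\subseteq A_{\mathrm{ar}_R(1)}\times\dots\times A_{\mathrm{ar}_R(k)}$. A homomorphism is a type-preserving family of maps preserving all relations; write $\mathbf A\to\mathbf B$. For a finite set $F$, $\mathbf B^F$ has domains $B_t^F$ and $(b_1,\dots,b_m)\in R^{\mathbf B^F}$ iff $(b_1(i),\dots,b_m(i))\in R^{\mathbf B}$ for all $i\in F$. Promise CSP. A promise template is a pair $(\mathbf A,\mathbf A')$ of structures of the same signature, $\mathbf A$ finite, $\mathbf A\to\mathbf A'$. $\mathrm{PCSP}(\mathbf A,\mathbf A')$: given finite $\mathbf X$, answer yes if $\mathbf X\to\mathbf A$, no if $\mathbf X\not\to\mathbf A'$; $\mathrm{CSP}(\mathbf B)=\mathrm{PCSP}(\mathbf B,\mathbf B)$. A map $\psi$ is a reduction from $\mathrm{PCSP}(\mathbf A,\mathbf A')$ to $\mathrm{PCSP}(\mathbf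 B,\mathbf B')$ if $\mathbf X\to\mathbf A\Rightarrow\psi(\mathbf X)\to\mathbf B$ and $\psi(\mathbf X)\to\mathbf B'\Rightarrow\mathbf X\to\mathbf A'$. Group template. For an Abelian group $\mathbb G$, $\mathbf G$ is the single-sorted structure with domain $G$, the ternary relation $\{(x_1,x_2,y)\mid x_1+x_2=y\}$, and a unary relation $\{b\}$ for each $b\in G$. $k$-consistency. For $\mathbf X$ and a set $K$ of at most $k$ elements of $\mathbf X$, a partial homomorphism $K\to\mathbf A$ is a type-preserving $f\colon K\to A$ with $(f(v_1),\dots,f(v_m))\in R^{\mathbf A}$ for every $(v_1,\dots,v_m)\in R^{\mathbf X}$ with all $v_i\in K$. Enforcing $k$-consistency: (1) let $\mathcal F_K$ be the set of partial homomorphisms $K\to\mathbf A$ for each $|K|\le k$; (2) for each $L\subset K$ remove from $\mathcal F_L$ elements not extending to some $g\in\mathcal F_K$ and from $\mathcal F_K$ every $g$ with $g|_L\notin\mathcal F_L$; (3) repeat (2) until stable. The $k$-consistency reduction $\kappa_k^{\mathbf A,\mathbf B}(\mathbf X)$ continues: (4) for each $K$ take a copy of $\mathbf B^{\mathcal F_K}$ with elements $(K;b)$; (5) for $L\subseteq K$ identify $(K;b\circ\rho_{K,L})$ with $(L;b)$ where $\rho_{K,L}(g)=g|_L$; output the quotient by the generated equivalence relation, relations being images. $\mathbb G$-affine $k$-consistency relaxation. Given $\mathbf X$, compute the final sets $\mathcal F_K$ from steps (1)–(3), and form the system of equations over $\mathbb G$ with variables $x_{K,f}\in G$ ($|K|\le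 k$, $f\in\mathcal F_K$): $\sum_{f\in\mathcal F_K}x_{K,f}=1$ for each $K$, and $\sum_{f\in\mathcal F_K,f|_L=g}x_{K,f}=x_{L,g}$ for each $L\subset K$, $g\in\mathcal F_L$. The relaxation accepts iff the system has a solution; it solves $\mathrm{PCSP}(\mathbf A,\mathbf A')$ if it rejects every $\mathbf X$ with $\mathbf X\not\to\mathbf A'$ (it always accepts when $\mathbf X\to\mathbf A$). *)

theory Defs
  imports Main "HOL-Library.FuncSet"
begin

text \<open>A signature is given by a type of sorts 't, a type of relation symbols 'r
  and an arity function ar :: 'r => 't list.  A structure has a domain per sort and
  a relation (set of tuples, as lists) per symbol.\<close>

record ('t, 'r, 'a) struc =
  sdom :: "'t \<Rightarrow> 'a set"
  srel :: "'r \<Rightarrow> 'a list set"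

definition wf_struc :: "('r \<Rightarrow> 't list) \<Rightarrow> ('t, 'r, 'a) struc \<Rightarrow> bool" where
  "wf_struc ar S \<longleftrightarrow>
     (\<forall>R. \<forall>xs \<in> srel S R. length xs = length (ar R) \<and>
                          (\<forall>i < length xs. xs ! i \<in> sdom S (ar R ! i)))"

definition elems :: "('t, 'r, 'a) struc \<Rightarrow> ('t \<times> 'a) set" where
  "elems S = Sigma UNIV (sdom S)"

definition finite_struc :: "('t, 'r, 'a) struc \<Rightarrow> bool" where
  "finite_struc S \<longleftrightarrow> finite (elems S)"

definition is_hom :: "'r set \<Rightarrow> ('r \<Rightarrow> 't list) \<Rightarrow> ('t, 'r, 'a) struc \<Rightarrow> ('t, 'r, 'b) struc
                      \<Rightarrow> ('t \<Rightarrow> 'a \<Rightarrow> 'b) \<Rightarrow> bool" where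
  "is_hom Sig ar S T h \<longleftrightarrow>
     (\<forall>t. \<forall>x \<in> sdom S t. h t x \<in> sdom T t) \<and>
     (\<forall>R \<in> Sig. \<forall>xs \<in> srel S R. map (\<lambda>i. h (ar R ! i) (xs ! i)) [0..<length xs] \<in> srel T R)"

definition homto :: "'r set \<Rightarrow> ('r \<Rightarrow> 't list) \<Rightarrow> ('t, 'r, 'a) struc \<Rightarrow> ('t, 'r, 'b) struc \<Rightarrow> bool" where
  "homto Sig ar S T \<longleftrightarrow> (\<exists>h. is_hom Sig ar S T h)"

definition promise_template :: "('r \<Rightarrow> 't list) \<Rightarrow> ('t, 'r, 'a) struc \<Rightarrow> ('t, 'r, 'b) struc \<Rightarrow> bool" where
  "promise_template ar A A' \<longleftrightarrow>
     wf_struc ar A \<and> wf_struc ar A' \<and> finite_struc A \<and> homto UNIV ar A A'"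

text \<open>Partial homomorphisms K -> A, as extensional functions on K.\<close>
definition is_phom :: "('r \<Rightarrow> 't list) \<Rightarrow> ('t, 'r, 'x) struc \<Rightarrow> ('t, 'r, 'a) struc
                       \<Rightarrow> ('t \<times> 'x) set \<Rightarrow> ('t \<times> 'x \<Rightarrow> 'a) \<Rightarrow> bool" where
  "is_phom ar X A K f \<longleftrightarrow>
     (\<forall>p \<in> K. f p \<in> sdom A (fst p)) \<and>
     (\<forall>p. p \<notin> K \<longrightarrow> f p = undefined) \<and>
     (\<forall>R. \<forall>xs \<in> srel X R. (\<forall>i < length xs. (ar R ! i, xs ! i) \<in> K) \<longrightarrow>
            map (\<lambda>i. f (ar R ! i, xs ! i)) [0..<length xs] \<in> srel A R)"

definition subsets_k :: "('t, 'r, 'x) struc \<Rightarrow> nat \<Rightarrow> ('t \<times> 'x) set set" where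
  "subsets_k X k = {K. K \<subseteq> elems X \<and> finite K \<and> card K \<le> k}"

definition init_fam :: "('r \<Rightarrow> 't list) \<Rightarrow> ('t, 'r, 'x) struc \<Rightarrow> ('t, 'r, 'a) struc \<Rightarrow> nat
                        \<Rightarrow> ('t \<times> 'x) set \<Rightarrow> ('t \<times> 'x \<Rightarrow> 'a) set" where
  "init_fam ar X A k K = (if K \<in> subsets_k X k then {f. is_phom ar X A K f} else {})"

text \<open>Step (2), applied for all pairs L subset K simultaneously.\<close>
definition cons_step :: "('t, 'r, 'x) struc \<Rightarrow> nat
                         \<Rightarrow> (('t \<times> 'x) set \<Rightarrow> ('t \<times> 'x \<Rightarrow> 'a) set)
                         \<Rightarrow> (('t \<times> 'x) set \<Rightarrow> ('t \<times> 'x \<Rightarrow> 'a) set)" where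
  "cons_step X k F K =
     {f \<in> F K. (\<forall>L. L \<subset> K \<longrightarrow> restrict f L \<in> F L) \<and>
               (\<forall>K'. K' \<in> subsets_k X k \<and> K \<subset> K' \<longrightarrow> (\<exists>g \<in> F K'. restrict g K = f))}"

text \<open>Step (3): repeat until stable (the sequence is decreasing; its limit).\<close>
definition final_fam :: "('r \<Rightarrow> 't list) \<Rightarrow> ('t, 'r, 'x) struc \<Rightarrow> ('t, 'r, 'a) struc \<Rightarrow> nat
                         \<Rightarrow> ('t \<times> 'x) set \<Rightarrow> ('t \<times> 'x \<Rightarrow> 'a) set" where
  "final_fam ar X A k K = (\<Inter>N. ((cons_step X k ^^ N) (init_fam ar X A k)) K)"

text \<open>Elements of the copies of B^{F_K}: triples (K, sort u, b) with b : F_K -> B_u.\<close>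
definition kcarrier :: "('r \<Rightarrow> 't list) \<Rightarrow> ('t, 'r, 'x) struc \<Rightarrow> ('t, 'r, 'a) struc \<Rightarrow> nat
      \<Rightarrow> ('u, 's, 'b) struc \<Rightarrow> (('t \<times> 'x) set \<times> 'u \<times> (('t \<times> 'x \<Rightarrow> 'a) \<Rightarrow> 'b)) set" where
  "kcarrier ar X A k B =
     {(K, u, b). K \<in> subsets_k X k \<and> b \<in> final_fam ar X A k K \<rightarrow>\<^sub>E sdom B u}"

definition kbase :: "('r \<Rightarrow> 't list) \<Rightarrow> ('t, 'r, 'x) struc \<Rightarrow> ('t, 'r, 'a) struc \<Rightarrow> nat
      \<Rightarrow> ('u, 's, 'b) struc
      \<Rightarrow> ((('t \<times> 'x) set \<times> 'u \<times> (('t \<times> 'x \<Rightarrow> 'a) \<Rightarrow> 'b)) \<times>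
          (('t \<times> 'x) set \<times> 'u \<times> (('t \<times> 'x \<Rightarrow> 'a) \<Rightarrow> 'b))) set" where
  "kbase ar X A k B =
     {((K, u, restrict (\<lambda>f. b (restrict f L)) (final_fam ar X A k K)), (L, u, b)) | K L u b.
        K \<in> subsets_k X k \<and> L \<subseteq> K \<and> b \<in> final_fam ar X A k L \<rightarrow>\<^sub>E sdom B u}"

definition keq :: "('r \<Rightarrow> 't list) \<Rightarrow> ('t, 'r, 'x) struc \<Rightarrow> ('t, 'r, 'a) struc \<Rightarrow> nat
      \<Rightarrow> ('u, 's, 'b) struc
      \<Rightarrow> ((('t \<times> 'x) set \<times> 'u \<times> (('t \<times> 'x \<Rightarrow> 'a) \<Rightarrow> 'b)) \<times>
          (('t \<times> 'x) set \<times> 'u \<times> (('t \<times> 'x \<Rightarrow> 'a) \<Rightarrow> 'b))) set" where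
  "keq ar X A k B = (kbase ar X A k B \<union> (kbase ar X A k B)\<inverse>)\<^sup>*"

text \<open>The quotient structure (signature of B, with arity arB); relations are the images
  of the relations of the copies of B^{F_K}.\<close>
definition kappa :: "('r \<Rightarrow> 't list) \<Rightarrow> ('t, 'r, 'x) struc \<Rightarrow> ('t, 'r, 'a) struc \<Rightarrow> nat
      \<Rightarrow> ('s \<Rightarrow> 'u list) \<Rightarrow> ('u, 's, 'b) struc
      \<Rightarrow> ('u, 's, (('t \<times> 'x) set \<times> 'u \<times> (('t \<times> 'x \<Rightarrow> 'a) \<Rightarrow> 'b)) set) struc" where
  "kappa ar X A k arB B =
     \<lparr> sdom = (\<lambda>u. {keq ar X A k B `` {(K, u, b)} | K b. (K, u, b) \<in> kcarrier ar X A k B}),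
       srel = (\<lambda>R. {map (\<lambda>i. keq ar X A k B `` {(K, arB R ! i, bs ! i)}) [0..<length (arB R)] | K bs.
                    K \<in> subsets_k X k \<and> length bs = length (arB R) \<and>
                    (\<forall>i < length bs. bs ! i \<in> final_fam ar X A k K \<rightarrow>\<^sub>E sdom B (arB R ! i)) \<and>
                    (\<forall>f \<in> final_fam ar X A k K. map (\<lambda>i. (bs ! i) f) [0..<length bs] \<in> srel B R)}) \<rparr>"

section \<open>Cyclic groups Z_n (n >= 1) and Z (encoded as n = 0)\<close>

definition gcar :: "nat \<Rightarrow> int set" where
  "gcar n = (if n = 0 then UNIV else {0..<int n})"

definition gadd :: "nat \<Rightarrow> int \<Rightarrow> int \<Rightarrow> int" where
  "gadd n x y = (x + y) mod int n"

datatype gsym = GAdd | GConst int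

fun gar :: "gsym \<Rightarrow> unit list" where
  "gar GAdd = [(), (), ()]"
| "gar (GConst b) = [()]"

definition gsig :: "nat \<Rightarrow> gsym set" where
  "gsig n = insert GAdd (GConst ` gcar n)"

definition Gtempl :: "nat \<Rightarrow> (unit, gsym, int) struc" where
  "Gtempl n =
     \<lparr> sdom = (\<lambda>_. gcar n),
       srel = (\<lambda>R. case R of
                GAdd \<Rightarrow> {[x1, x2, y] | x1 x2 y. x1 \<in> gcar n \<and> x2 \<in> gcar n \<and> y = gadd n x1 x2}
              | GConst b \<Rightarrow> {[b]}) \<rparr>"

text \<open>Sums in G = Z_n are integer sums reduced mod n (for n = 0, mod 0 is the identity).\<close>
definition affine_accepts :: "nat \<Rightarrow> nat \<Rightarrow> ('r \<Rightarrow> 't list) \<Rightarrow> ('t, 'r, 'a) struc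
                              \<Rightarrow> ('t, 'r, 'x) struc \<Rightarrow> bool" where
  "affine_accepts n k ar A X \<longleftrightarrow>
     (\<exists>x :: ('t \<times> 'x) set \<Rightarrow> ('t \<times> 'x \<Rightarrow> 'a) \<Rightarrow> int.
        (\<forall>K \<in> subsets_k X k. \<forall>f \<in> final_fam ar X A k K. x K f \<in> gcar n) \<and>
        (\<forall>K \<in> subsets_k X k. (\<Sum>f \<in> final_fam ar X A k K. x K f) mod int n = 1 mod int n) \<and>
        (\<forall>K \<in> subsets_k X k. \<forall>L. L \<subset> K \<longrightarrow>
           (\<forall>g \<in> final_fam ar X A k L.
              (\<Sum>f \<in> {f \<in> final_fam ar X A k K. restrict f L = g}. x K f) mod int n
                = x L g mod int n)))"

text \<open>Instances range over finite structures; up to isomorphism their elements can be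
  taken to be natural numbers.\<close>
definition affine_solves :: "nat \<Rightarrow> nat \<Rightarrow> ('r \<Rightarrow> 't list) \<Rightarrow> ('t, 'r, 'a) struc
                             \<Rightarrow> ('t, 'r, 'b) struc \<Rightarrow> bool" where
  "affine_solves n k ar A A' \<longleftrightarrow>
     (\<forall>X :: ('t, 'r, nat) struc. wf_struc ar X \<and> finite_struc X \<and> \<not> homto UNIV ar X A'
        \<longrightarrow> \<not> affine_accepts n k ar A X)"

definition kappa_is_reduction :: "nat \<Rightarrow> nat \<Rightarrow> ('r \<Rightarrow> 't list) \<Rightarrow> ('t, 'r, 'a) struc
                                  \<Rightarrow> ('t, 'r, 'b) struc \<Rightarrow> bool" where
  "kappa_is_reduction n k ar A A' \<longleftrightarrow>
     (\<forall>X :: ('t, 'r, nat) struc. wf_struc ar X \<and> finite_struc X \<longrightarrow>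
        (homto UNIV ar X A \<longrightarrow> homto (gsig n) gar (kappa ar X A k gar (Gtempl n)) (Gtempl n)) \<and>
        (homto (gsig n) gar (kappa ar X A k gar (Gtempl n)) (Gtempl n) \<longrightarrow> homto UNIV ar X A'))"

end

theory Submission
  imports Defs
begin


lemma gcar_mod: "x mod int n \<in> gcar n"
  by (auto simp: gcar_def)

lemma gcar_modid: "x \<in> gcar n \<Longrightarrow> x mod int n = x"
  by (cases "n = 0") (auto simp: gcar_def)

lemma one_gcar: "n \<noteq> 1 \<Longrightarrow> (1::int) \<in> gcar n"
  by (auto simp: gcar_def)

lemma zero_gcar: "(0::int) \<in> gcar n"
  by (auto simp: gcar_def)

lemma one_mod: "n \<noteq> 1 \<Longrightarrow> (1::int) mod int n = 1"
  by (cases "n = 0") auto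

lemma lin:
  fixes \<phi> :: "('f \<Rightarrow> int) \<Rightarrow> int" and F :: "'f set" and n :: nat
  assumes fin: "finite F" and n1: "n \<noteq> 1"
  and add: "\<And>b1 b2. b1 \<in> F \<rightarrow>\<^sub>E gcar n \<Longrightarrow> b2 \<in> F \<rightarrow>\<^sub>E gcar n \<Longrightarrow>
      \<phi> (restrict (\<lambda>f. gadd n (b1 f) (b2 f)) F) mod int n = (\<phi> b1 + \<phi> b2) mod int n"
  and b: "b \<in> F \<rightarrow>\<^sub>E gcar n"
  shows "\<phi> b mod int n = (\<Sum>f\<in>F. b f * \<phi> (restrict (\<lambda>g. if g = f then 1 else 0) F)) mod int n"
proof -
  define \<delta> where "\<delta> f = restrict (\<lambda>g. if g = f then (1::int) else 0) F" for f :: 'f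
  define sc where "sc c f = restrict (\<lambda>g. if g = f then c mod int n else 0) F" for c :: int and f :: 'f
  have sc_in: "sc c f \<in> F \<rightarrow>\<^sub>E gcar n" for c f
    by (auto simp: sc_def gcar_mod zero_gcar)
  have sc1: "sc 1 f = \<delta> f" for f
    by (auto simp: sc_def \<delta>_def one_mod[OF n1])
  have sc_step: "sc (c+1) f = restrict (\<lambda>g. gadd n (sc c f g) (\<delta> f g)) F" for c f
    by (auto simp: sc_def \<delta>_def gadd_def mod_add_left_eq)
  have stepphi: "\<phi> (sc (c+1) f) mod int n = (\<phi> (sc c f) + \<phi> (\<delta> f)) mod int n" for c f
    using add[OF sc_in[of c f] sc_in[of 1 f]] sc_step[of c f] sc1[of f] by simp
  have sc_phi: "\<phi> (sc c f) mod int n = (c * \<phi> (\<delta> f)) mod int n" for c f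
  proof (induction c rule: int_induct[where k=1])
    case base
    then show ?case using sc1 by simp
  next
    case (step1 i)
    have "\<phi> (sc (i+1) f) mod int n = (\<phi> (sc i f) mod int n + \<phi> (\<delta> f)) mod int n"
      using stepphi by (simp add: mod_add_left_eq)
    also have "\<dots> = (i * \<phi> (\<delta> f) + \<phi> (\<delta> f)) mod int n" using step1 by (simp add: mod_add_left_eq)
    finally show ?case by (simp add: distrib_right)
  next
    case (step2 i)
    have "\<phi> (sc i f) mod int n = (\<phi> (sc (i-1) f) + \<phi> (\<delta> f)) mod int n"
      using stepphi[of "i-1" f] by simp
    hence "(\<phi> (sc i f) - \<phi> (\<delta> f)) mod int n = \<phi> (sc (i-1) f) mod int n"
      by (metis add_diff_cancel_right' mod_diff_left_eq)
    moreover have "(\<phi> (sc i f) - \<phi> (\<delta> f)) mod int n = (i * \<phi> (\<delta> f) - \<phi> (\<delta> f)) mod int n"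
      using step2 by (metis mod_diff_left_eq)
    ultimately show ?case by (simp add: left_diff_distrib)
  qed
  define z where "z = restrict (\<lambda>g. 0::int) F"
  have z_in: "z \<in> F \<rightarrow>\<^sub>E gcar n" by (auto simp: z_def zero_gcar)
  have "restrict (\<lambda>g. gadd n (z g) (z g)) F = z" by (auto simp: z_def gadd_def)
  hence "\<phi> z mod int n = (\<phi> z + \<phi> z) mod int n" using add[OF z_in z_in] by simp
  hence z0: "\<phi> z mod int n = 0"
    by (metis add_diff_cancel_right' dvd_imp_mod_0 mod_eq_dvd_iff)
  define bS where "bS S = restrict (\<lambda>g. if g \<in> S then b g else 0) F" for S
  have bS_in: "bS S \<in> F \<rightarrow>\<^sub>E gcar n" for S
    using b by (auto simp: bS_def zero_gcar)
  have bcar: "g \<in> F \<Longrightarrow> b g \<in> gcar n" for g using b by auto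
  have "\<phi> (bS S) mod int n = (\<Sum>f\<in>S. b f * \<phi> (\<delta> f)) mod int n" if S: "S \<subseteq> F" for S
    using finite_subset[OF S fin] S
  proof (induction S rule: finite_subset_induct)
    case empty
    have "bS {} = z" by (auto simp: bS_def z_def)
    then show ?case using z0 by simp
  next
    case (insert a S)
    have eq: "bS (insert a S) = restrict (\<lambda>g. gadd n (bS S g) (sc (b a) a g)) F"
      using insert bcar by (auto simp: bS_def sc_def gadd_def gcar_modid)
    have "\<phi> (bS (insert a S)) mod int n = (\<phi> (bS S) + \<phi> (sc (b a) a)) mod int n"
      using add[OF bS_in sc_in] eq by simp
    also have "\<dots> = (\<phi> (bS S) mod int n + \<phi> (sc (b a) a) mod int n) mod int n"
      by (simp add: mod_add_eq)
    also have "\<dots> = ((\<Sum>f\<in>S. b f * \<phi> (\<delta> f)) mod int n + (b a * \<phi> (\<delta> a)) mod int n) mod int n"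
      using insert sc_phi by simp
    also have "\<dots> = (\<Sum>f\<in>insert a S. b f * \<phi> (\<delta> f)) mod int n"
      using insert by (simp add: mod_add_eq add.commute)
    finally show ?case .
  qed
  moreover have "bS F = b" using b by (auto simp: bS_def fun_eq_iff PiE_def extensional_def)
  ultimately have "\<phi> (bS F) mod int n = (\<Sum>f\<in>F. b f * \<phi> (\<delta> f)) mod int n" by blast
  then show ?thesis using `bS F = b` by (simp add: \<delta>_def)
qed


lemma final_sub_init: "final_fam ar X A k K \<subseteq> init_fam ar X A k K"
proof
  fix f assume "f \<in> final_fam ar X A k K"
  hence "f \<in> ((cons_step X k ^^ 0) (init_fam ar X A k)) K" unfolding final_fam_def by blast
  thus "f \<in> init_fam ar X A k K" by simp
qed

lemma final_phom: "f \<in> final_fam ar X A k K \<Longrightarrow> K \<in> subsets_k X k \<and> is_phom ar X A K f"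
  using final_sub_init[of ar X A k K] unfolding init_fam_def by (cases "K \<in> subsets_k X k") auto

lemma final_restrict_self: "f \<in> final_fam ar X A k K \<Longrightarrow> restrict f K = f"
  using final_phom[of f ar X A k K] unfolding is_phom_def restrict_def fun_eq_iff by metis

lemma final_restrict:
  assumes "L \<subseteq> K" "f \<in> final_fam ar X A k K"
  shows "restrict f L \<in> final_fam ar X A k L"
proof (cases "L = K")
  case True then show ?thesis using assms final_restrict_self by metis
next
  case False
  hence LK: "L \<subset> K" using assms by auto
  show ?thesis unfolding final_fam_def
  proof
    fix N
    have "f \<in> ((cons_step X k ^^ Suc N) (init_fam ar X A k)) K"
      using assms(2) unfolding final_fam_def by blast
    hence "f \<in> cons_step X k ((cons_step X k ^^ N) (init_fam ar X A k)) K" by simp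
    thus "restrict f L \<in> ((cons_step X k ^^ N) (init_fam ar X A k)) L"
      using LK unfolding cons_step_def by blast
  qed
qed

lemma subsets_k_sub: "K \<in> subsets_k X k \<Longrightarrow> L \<subseteq> K \<Longrightarrow> L \<in> subsets_k X k"
  unfolding subsets_k_def
proof (clarsimp)
  assume "K \<subseteq> elems X" "finite K" "card K \<le> k" "L \<subseteq> K"
  thus "L \<subseteq> elems X \<and> finite L \<and> card L \<le> k"
    using card_mono[of K L] finite_subset[of L K] by simp
qed
lemma final_finite:
  assumes "finite_struc A"
  shows "finite (final_fam ar X A k K)"
proof (cases "K \<in> subsets_k X k")
  case True
  have "final_fam ar X A k K \<subseteq> K \<rightarrow>\<^sub>E (snd ` elems A)"
  proof
    fix f assume f: "f \<in> final_fam ar X A k K"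
    hence "is_phom ar X A K f" using final_phom by blast
    thus "f \<in> K \<rightarrow>\<^sub>E (snd ` elems A)"
      unfolding is_phom_def elems_def PiE_def extensional_def
      by (auto intro!: image_eqI[where x="(fst p, f p)" for p])
  qed
  moreover have "finite (K \<rightarrow>\<^sub>E (snd ` elems A))"
    using True assms by (intro finite_PiE) (auto simp: subsets_k_def finite_struc_def)
  ultimately show ?thesis by (rule finite_subset)
next
  case False
  then show ?thesis using final_phom by (metis finite.emptyI subsetI empty_iff finite_subset)
qed

lemma cons_step_mem: "f \<in> cons_step X k P K \<longleftrightarrow> f \<in> P K \<and> (\<forall>L. L \<subset> K \<longrightarrow> restrict f L \<in> P L) \<and>
   (\<forall>K'. K' \<in> subsets_k X k \<and> K \<subset> K' \<longrightarrow> (\<exists>g\<in>P K'. restrict g K = f))"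
  by (simp add: cons_step_def)

lemma hom_in_final:
  assumes hom: "is_hom UNIV ar X A g" and K: "K \<in> subsets_k X k"
  shows "restrict (\<lambda>p. g (fst p) (snd p)) K \<in> final_fam ar X A k K"
proof -
  define fK where "fK K = restrict (\<lambda>p. g (fst p) (snd p)) K" for K
  have "\<forall>K \<in> subsets_k X k. fK K \<in> ((cons_step X k ^^ N) (init_fam ar X A k)) K" for N
  proof (induction N)
    case 0
    show ?case
    proof
      fix K assume K: "K \<in> subsets_k X k"
      have "is_phom ar X A K (fK K)"
        unfolding is_phom_def
      proof (intro conjI allI ballI impI)
        fix p assume "p \<in> K"
        hence "snd p \<in> sdom X (fst p)" using K by (auto simp: subsets_k_def elems_def)
        thus "fK K p \<in> sdom A (fst p)" using hom \<open>p \<in> K\<close> by (auto simp: is_hom_def fK_def)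
      next
        fix p assume "p \<notin> K" thus "fK K p = undefined" by (simp add: fK_def)
      next
        fix R xs assume xs: "xs \<in> srel X R" and all: "\<forall>i<length xs. (ar R ! i, xs ! i) \<in> K"
        have "map (\<lambda>i. fK K (ar R ! i, xs ! i)) [0..<length xs] = map (\<lambda>i. g (ar R ! i) (xs ! i)) [0..<length xs]"
          using all by (auto simp: fK_def)
        also have "\<dots> \<in> srel A R" using hom xs by (auto simp: is_hom_def)
        finally show "map (\<lambda>i. fK K (ar R ! i, xs ! i)) [0..<length xs] \<in> srel A R" .
      qed
      thus "fK K \<in> (cons_step X k ^^ 0) (init_fam ar X A k) K" using K by (simp add: init_fam_def)
    qed
  next
    case (Suc N)
    show ?case
    proof
      fix K assume K: "K \<in> subsets_k X k"
      have r: "restrict (fK K') K'' = fK K''" if "K'' \<subseteq> K'" for K' K'' using that by (auto simp: fK_def restrict_def fun_eq_iff)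
      let ?P = "(cons_step X k ^^ N) (init_fam ar X A k)"
      have "fK K \<in> cons_step X k ?P K"
      proof (subst cons_step_mem, intro conjI allI impI)
        show "fK K \<in> ?P K" using Suc K by blast
      next
        fix L assume "L \<subset> K"
        thus "restrict (fK K) L \<in> ?P L" using Suc subsets_k_sub[OF K, of L] r[of L K] by auto
      next
        fix K' assume "K' \<in> subsets_k X k \<and> K \<subset> K'"
        thus "\<exists>g\<in>?P K'. restrict g K = fK K" using Suc r[of K K'] by auto
      qed
      thus "fK K \<in> (cons_step X k ^^ Suc N) (init_fam ar X A k) K" by simp
    qed
  qed
  thus ?thesis using K unfolding final_fam_def fK_def by blast
qed

lemma hom_accepts:
  assumes finA: "finite_struc A" and hom: "is_hom UNIV ar X A g"
  shows "affine_accepts n k ar A X"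
proof -
  define fK where "fK K = restrict (\<lambda>p. g (fst p) (snd p)) K" for K
  define x where "x K f = (if f = fK K then 1 mod int n else 0)" for K f
  have fin: "fK K \<in> final_fam ar X A k K" if "K \<in> subsets_k X k" for K
    using hom_in_final[OF hom that] by (simp add: fK_def)
  have r: "restrict (fK K) L = fK L" if "L \<subseteq> K" for K L using that by (auto simp: fK_def restrict_def fun_eq_iff)
  show ?thesis unfolding affine_accepts_def
  proof (intro exI[of _ x] conjI ballI allI impI)
    fix K f show "x K f \<in> gcar n" by (simp add: x_def gcar_mod zero_gcar)
  next
    fix K assume K: "K \<in> subsets_k X k"
    show "(\<Sum>f\<in>final_fam ar X A k K. x K f) mod int n = 1 mod int n"
      using fin[OF K] by (simp add: x_def sum.delta[OF final_finite[OF finA]])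
  next
    fix K L g assume K: "K \<in> subsets_k X k" and LK: "L \<subset> K" and g: "g \<in> final_fam ar X A k L"
    have "(\<Sum>f\<in>{f \<in> final_fam ar X A k K. restrict f L = g}. x K f) = (if fK L = g then 1 mod int n else 0)"
    proof -
      have finS: "finite {f \<in> final_fam ar X A k K. restrict f L = g}"
        using final_finite[OF finA, of ar X k K] by simp
      have "restrict (fK K) L = fK L" using r[of L K] LK by blast
      then show ?thesis unfolding x_def using sum.delta[OF finS, of "fK K" "\<lambda>_. 1 mod int n"] fin[OF K]
        by simp
    qed
    then show "(\<Sum>f\<in>{f \<in> final_fam ar X A k K. restrict f L = g}. x K f) mod int n = x L g mod int n"
      by (auto simp: x_def)
  qed
qed



lemma upt3: "[0..<3] = [0,1,2::nat]" by (simp add: upt_rec)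
lemma upt1: "[0..<1] = [0::nat]" by simp

lemma sdomG[simp]: "sdom (Gtempl n) u = gcar n" by (simp add: Gtempl_def)
lemma srelG_add: "srel (Gtempl n) GAdd = {[x1, x2, y] | x1 x2 y. x1 \<in> gcar n \<and> x2 \<in> gcar n \<and> y = gadd n x1 x2}"
  by (simp add: Gtempl_def)
lemma srelG_const: "srel (Gtempl n) (GConst c) = {[c]}"
  by (simp add: Gtempl_def)

lemma keq_sym: "(p,q) \<in> keq ar X A k B \<Longrightarrow> (q,p) \<in> keq ar X A k B"
proof -
  let ?S = "kbase ar X A k B \<union> (kbase ar X A k B)\<inverse>"
  assume "(p,q) \<in> keq ar X A k B"
  hence "(q,p) \<in> (?S\<^sup>*)\<inverse>" unfolding keq_def by simp
  also have "(?S\<^sup>*)\<inverse> = (?S\<inverse>)\<^sup>*" by (simp add: rtrancl_converse)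
  also have "?S\<inverse> = ?S" by auto
  finally show ?thesis unfolding keq_def .
qed

lemma keq_trans: "(p,q) \<in> keq ar X A k B \<Longrightarrow> (q,r) \<in> keq ar X A k B \<Longrightarrow> (p,r) \<in> keq ar X A k B"
  unfolding keq_def by (rule rtrancl_trans)

lemma keq_cls: "(p,q) \<in> keq ar X A k B \<Longrightarrow> keq ar X A k B `` {p} = keq ar X A k B `` {q}"
  by (auto intro: keq_trans keq_sym)

lemma keq_refl: "p \<in> keq ar X A k B `` {p}"
  by (simp add: keq_def)

lemma accepts_homto:
  fixes ar :: "'r \<Rightarrow> 't list" and X :: "('t,'r,'x) struc" and A :: "('t,'r,'a) struc"
  assumes finA: "finite_struc A" and acc: "affine_accepts n k ar A X"
  shows "homto (gsig n) gar (kappa ar X A k gar (Gtempl n)) (Gtempl n)"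
proof -
  let ?F = "final_fam ar X A k"
  let ?E = "keq ar X A k (Gtempl n)"
  from acc[unfolded affine_accepts_def] obtain x where xx:
      "(\<forall>K \<in> subsets_k X k. \<forall>f \<in> ?F K. x K f \<in> gcar n) \<and>
       (\<forall>K \<in> subsets_k X k. (\<Sum>f \<in> ?F K. x K f) mod int n = 1 mod int n) \<and>
       (\<forall>K \<in> subsets_k X k. \<forall>L. L \<subset> K \<longrightarrow>
           (\<forall>g \<in> ?F L. (\<Sum>f \<in> {f \<in> ?F K. restrict f L = g}. x K f) mod int n = x L g mod int n))" ..
  have x2: "\<forall>K \<in> subsets_k X k. (\<Sum>f \<in> ?F K. x K f) mod int n = 1 mod int n"
    using xx by (rule conjE) (rule conjunct1)
  have x3: "\<forall>K \<in> subsets_k X k. \<forall>L. L \<subset> K \<longrightarrow>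
           (\<forall>g \<in> ?F L. (\<Sum>f \<in> {f \<in> ?F K. restrict f L = g}. x K f) mod int n = x L g mod int n)"
    using xx by (rule conjE) (rule conjunct2)
  have finF: "finite (?F K)" for K by (rule final_finite[OF finA])
  define \<phi> where "\<phi> p = (\<Sum>f\<in>?F (fst p). x (fst p) f * snd (snd p) f) mod int n"
    for p :: "('t \<times> 'x) set \<times> unit \<times> (('t \<times> 'x \<Rightarrow> 'a) \<Rightarrow> int)"
  have inv: "\<phi> p = \<phi> q" if "(p,q) \<in> kbase ar X A k (Gtempl n)" for p q
  proof -
    from that obtain K L u b where p: "p = (K, u, restrict (\<lambda>f. b (restrict f L)) (?F K))"
      and q: "q = (L,u,b)" and K: "K \<in> subsets_k X k" and LK: "L \<subseteq> K"
      unfolding kbase_def by blast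
    have "\<phi> p = (\<Sum>f\<in>?F K. x K f * b (restrict f L)) mod int n"
      unfolding \<phi>_def p by (simp cong: sum.cong)
    also have "\<dots> = (\<Sum>g\<in>?F L. x L g * b g) mod int n"
    proof (cases "L = K")
      case True
      then show ?thesis using final_restrict_self[of _ ar X A k K] by (simp cong: sum.cong)
    next
      case False
      hence LK': "L \<subset> K" using LK by auto
      have termeq: "(b g * (\<Sum>f\<in>{f \<in> ?F K. restrict f L = g}. x K f)) mod int n = (b g * x L g) mod int n"
        if g: "g \<in> ?F L" for g
      proof -
        have "(b g * (\<Sum>f\<in>{f \<in> ?F K. restrict f L = g}. x K f)) mod int n
           = (b g * ((\<Sum>f\<in>{f \<in> ?F K. restrict f L = g}. x K f) mod int n)) mod int n"
          by (simp add: mod_mult_right_eq)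
        also have "\<dots> = (b g * (x L g mod int n)) mod int n" using x3 K LK' g by simp
        also have "\<dots> = (b g * x L g) mod int n" by (simp add: mod_mult_right_eq)
        finally show ?thesis .
      qed
      have "(\<Sum>f\<in>?F K. x K f * b (restrict f L))
          = (\<Sum>g\<in>?F L. \<Sum>f\<in>{f \<in> ?F K. restrict f L = g}. x K f * b (restrict f L))"
        by (rule sum.group[symmetric]) (use finF final_restrict[OF LK] in auto)
      also have "\<dots> = (\<Sum>g\<in>?F L. b g * (\<Sum>f\<in>{f \<in> ?F K. restrict f L = g}. x K f))"
        by (rule sum.cong) (auto simp: sum_distrib_left mult.commute intro: sum.cong)
      finally have "(\<Sum>f\<in>?F K. x K f * b (restrict f L)) mod int n
          = (\<Sum>g\<in>?F L. (b g * (\<Sum>f\<in>{f \<in> ?F K. restrict f L = g}. x K f)) mod int n) mod int n"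
        by (simp add: mod_sum_eq)
      also have "\<dots> = (\<Sum>g\<in>?F L. (b g * x L g) mod int n) mod int n"
        by (rule arg_cong[where f="\<lambda>s. s mod int n"], rule sum.cong[OF refl termeq])
      also have "\<dots> = (\<Sum>g\<in>?F L. x L g * b g) mod int n" by (simp add: mod_sum_eq mult.commute)
      finally show ?thesis .
    qed
    also have "\<dots> = \<phi> q" unfolding \<phi>_def q by simp
    finally show ?thesis .
  qed
  have invE: "\<phi> p = \<phi> q" if "(p,q) \<in> ?E" for p q
    using that unfolding keq_def
  proof (induction rule: rtrancl_induct)
    case base then show ?case by simp
  next
    case (step y z) then show ?case using inv[of y z] inv[of z y] by auto
  qed
  define h where "h (u::unit) C = \<phi> (SOME p. p \<in> C)" for u C
  have hcls: "h u (?E `` {p}) = \<phi> p" for u p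
  proof -
    have "(SOME q. q \<in> ?E `` {p}) \<in> ?E `` {p}" using keq_refl by (rule someI)
    then show ?thesis unfolding h_def using invE by auto
  qed
  have phigcar: "\<phi> p \<in> gcar n" for p by (simp add: \<phi>_def gcar_mod)
  show ?thesis unfolding homto_def is_hom_def
  proof (intro exI[of _ h] conjI allI ballI)
    fix t C assume "C \<in> sdom (kappa ar X A k gar (Gtempl n)) t"
    then obtain K b where "C = ?E `` {(K,t,b)}" by (auto simp: kappa_def)
    then show "h t C \<in> sdom (Gtempl n) t" by (simp add: hcls phigcar)
  next
    fix R xs assume R: "R \<in> gsig n" and xs: "xs \<in> srel (kappa ar X A k gar (Gtempl n)) R"
    have ex: "\<exists>K bs. xs = map (\<lambda>i. ?E `` {(K, gar R ! i, bs ! i)}) [0..<length (gar R)] \<and>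
       K \<in> subsets_k X k \<and> length bs = length (gar R) \<and>
       (\<forall>i < length bs. bs ! i \<in> ?F K \<rightarrow>\<^sub>E sdom (Gtempl n) (gar R ! i)) \<and>
       (\<forall>f\<in>?F K. map (\<lambda>i. (bs ! i) f) [0..<length bs] \<in> srel (Gtempl n) R)"
      using xs by (simp only: kappa_def struc.select_convs mem_Collect_eq)
    obtain K bs where xs_eq: "xs = map (\<lambda>i. ?E `` {(K, gar R ! i, bs ! i)}) [0..<length (gar R)]"
      and K: "K \<in> subsets_k X k" and len: "length bs = length (gar R)"
      and rel: "\<forall>f\<in>?F K. map (\<lambda>i. (bs ! i) f) [0..<length bs] \<in> srel (Gtempl n) R"
      using ex by (elim exE conjE) (rule that)
    have hx: "map (\<lambda>i. h (gar R ! i) (xs ! i)) [0..<length xs] = map (\<lambda>i. \<phi> (K, (), bs ! i)) [0..<length bs]"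
      using len by (simp add: xs_eq hcls)
    have "map (\<lambda>i. \<phi> (K, (), bs ! i)) [0..<length bs] \<in> srel (Gtempl n) R"
    proof (cases R)
      case GAdd
      then obtain b0 b1 b2 where bs: "bs = [b0,b1,b2]" using len
        by (auto simp: numeral_3_eq_3 length_Suc_conv)
      have b2: "b2 f = (b0 f + b1 f) mod int n" if "f \<in> ?F K" for f
        using rel that by (auto simp: bs GAdd upt3 srelG_add srelG_const gadd_def)
      have "\<phi> (K, (), b2) = (\<Sum>f\<in>?F K. (x K f * ((b0 f + b1 f) mod int n)) mod int n) mod int n"
        by (simp add: \<phi>_def b2 mod_sum_eq cong: sum.cong)
      also have "\<dots> = (\<Sum>f\<in>?F K. (x K f * (b0 f + b1 f)) mod int n) mod int n"
        by (simp add: mod_mult_right_eq)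
      also have "\<dots> = ((\<Sum>f\<in>?F K. x K f * b0 f) + (\<Sum>f\<in>?F K. x K f * b1 f)) mod int n"
        by (simp add: mod_sum_eq distrib_left sum.distrib)
      also have "\<dots> = gadd n (\<phi> (K, (), b0)) (\<phi> (K, (), b1))"
        by (simp add: \<phi>_def gadd_def mod_add_eq)
      finally show ?thesis by (simp add: bs GAdd upt3 srelG_add srelG_const phigcar)
    next
      case (GConst c)
      then obtain b0 where bs: "bs = [b0]" using len by (auto simp: length_Suc_conv)
      have cg: "c \<in> gcar n" using R GConst by (auto simp: gsig_def)
      have b0: "b0 f = c" if "f \<in> ?F K" for f
        using rel that by (auto simp: bs GConst srelG_add srelG_const)
      have "\<phi> (K, (), b0) = (c * (\<Sum>f\<in>?F K. x K f)) mod int n"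
        by (simp add: \<phi>_def b0 sum_distrib_left mult.commute cong: sum.cong)
      also have "\<dots> = (c * ((\<Sum>f\<in>?F K. x K f) mod int n)) mod int n" by (simp add: mod_mult_right_eq)
      also have "\<dots> = c" proof -
        have "(\<Sum>f\<in>?F K. x K f) mod int n = 1 mod int n" using x2 K by blast
        hence "(c * ((\<Sum>f\<in>?F K. x K f) mod int n)) mod int n = (c * (1 mod int n)) mod int n" by simp
        also have "\<dots> = c mod int n" by (metis mod_mult_right_eq mult.right_neutral)
        also have "\<dots> = c" using cg by (rule gcar_modid)
        finally show ?thesis .
      qed
      finally show ?thesis by (simp add: bs GConst srelG_add srelG_const)
    qed
    then show "map (\<lambda>i. h (gar R ! i) (xs ! i)) [0..<length xs] \<in> srel (Gtempl n) R"
      using hx by simp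
  qed
qed



lemma homto_accepts:
  fixes ar :: "'r \<Rightarrow> 't list" and X :: "('t,'r,'x) struc" and A :: "('t,'r,'a) struc"
  assumes finA: "finite_struc A" and hom: "homto (gsig n) gar (kappa ar X A k gar (Gtempl n)) (Gtempl n)"
  shows "affine_accepts n k ar A X"
proof (cases "n = 1")
  case True
  show ?thesis unfolding affine_accepts_def
    by (rule exI[of _ "\<lambda>_ _. 0"]) (simp add: True gcar_def)
next
  case n1: False
  let ?F = "final_fam ar X A k"
  let ?E = "keq ar X A k (Gtempl n)"
  let ?Kp = "kappa ar X A k gar (Gtempl n)"
  from hom obtain h where h: "is_hom (gsig n) gar ?Kp (Gtempl n) h" unfolding homto_def ..
  have hd: "\<forall>t. \<forall>C \<in> sdom ?Kp t. h t C \<in> sdom (Gtempl n) t" using h unfolding is_hom_def by (rule conjunct1)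
  have hr: "\<forall>R\<in>gsig n. \<forall>xs \<in> srel ?Kp R. map (\<lambda>i. h (gar R ! i) (xs ! i)) [0..<length xs] \<in> srel (Gtempl n) R"
    using h unfolding is_hom_def by (rule conjunct2)
  have finF: "finite (?F K)" for K by (rule final_finite[OF finA])
  define \<phi> where "\<phi> K b = h () (?E `` {(K, (), b)})" for K b
  have hdom: "\<phi> K b \<in> gcar n" if K: "K \<in> subsets_k X k" and b: "b \<in> ?F K \<rightarrow>\<^sub>E gcar n" for K b
  proof -
    have "?E `` {(K, (), b)} \<in> sdom ?Kp ()"
      unfolding kappa_def struc.select_convs kcarrier_def using K b by auto
    then show ?thesis using hd unfolding \<phi>_def by force
  qed
  have hadd: "\<phi> K (restrict (\<lambda>f. gadd n (b1 f) (b2 f)) (?F K)) mod int n = (\<phi> K b1 + \<phi> K b2) mod int n"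
    if K: "K \<in> subsets_k X k" and b1: "b1 \<in> ?F K \<rightarrow>\<^sub>E gcar n" and b2: "b2 \<in> ?F K \<rightarrow>\<^sub>E gcar n" for K b1 b2
  proof -
    define b3 where "b3 = restrict (\<lambda>f. gadd n (b1 f) (b2 f)) (?F K)"
    have b3: "b3 \<in> ?F K \<rightarrow>\<^sub>E gcar n" by (auto simp: b3_def gadd_def gcar_mod)
    have mem: "[?E `` {(K, (), b1)}, ?E `` {(K, (), b2)}, ?E `` {(K, (), b3)}] \<in> srel ?Kp GAdd"
      unfolding kappa_def struc.select_convs mem_Collect_eq
    proof (intro exI[of _ K] exI[of _ "[b1,b2,b3]"] conjI)
      show "[?E `` {(K, (), b1)}, ?E `` {(K, (), b2)}, ?E `` {(K, (), b3)}] =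
        map (\<lambda>i. ?E `` {(K, gar GAdd ! i, [b1, b2, b3] ! i)}) [0..<length (gar GAdd)]"
        by (simp add: upt3)
      show "K \<in> subsets_k X k" by (rule K)
      show "length [b1, b2, b3] = length (gar GAdd)" by simp
      show "\<forall>i<length [b1, b2, b3]. [b1, b2, b3] ! i \<in> ?F K \<rightarrow>\<^sub>E sdom (Gtempl n) (gar GAdd ! i)"
        using b1 b2 b3 by (auto simp: numeral_3_eq_3 less_Suc_eq nth_Cons')
      show "\<forall>f\<in>?F K. map (\<lambda>i. ([b1, b2, b3] ! i) f) [0..<length [b1, b2, b3]] \<in> srel (Gtempl n) GAdd"
        using b1 b2 by (auto simp: upt3 srelG_add b3_def)
    qed
    have GA: "GAdd \<in> gsig n" by (simp add: gsig_def)
    have "map (\<lambda>i. h (gar GAdd ! i) ([?E `` {(K, (), b1)}, ?E `` {(K, (), b2)}, ?E `` {(K, (), b3)}] ! i)) [0..<length [?E `` {(K, (), b1)}, ?E `` {(K, (), b2)}, ?E `` {(K, (), b3)}]]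
       \<in> srel (Gtempl n) GAdd" by (rule hr[rule_format, OF GA mem])
    hence "\<phi> K b3 = gadd n (\<phi> K b1) (\<phi> K b2)" by (simp add: upt3 srelG_add \<phi>_def)
    thus ?thesis by (simp add: b3_def gadd_def)
  qed
  have hconst: "\<phi> K (restrict (\<lambda>_. c) (?F K)) = c" if K: "K \<in> subsets_k X k" and c: "c \<in> gcar n" for K c
  proof -
    define b where "b = restrict (\<lambda>_. c) (?F K)"
    have mem: "[?E `` {(K, (), b)}] \<in> srel ?Kp (GConst c)"
      unfolding kappa_def struc.select_convs mem_Collect_eq
    proof (intro exI[of _ K] exI[of _ "[b]"] conjI)
      show "[?E `` {(K, (), b)}] = map (\<lambda>i. ?E `` {(K, gar (GConst c) ! i, [b] ! i)}) [0..<length (gar (GConst c))]"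
        by simp
      show "K \<in> subsets_k X k" by (rule K)
      show "length [b] = length (gar (GConst c))" by simp
      show "\<forall>i<length [b]. [b] ! i \<in> ?F K \<rightarrow>\<^sub>E sdom (Gtempl n) (gar (GConst c) ! i)"
        using c by (auto simp: b_def)
      show "\<forall>f\<in>?F K. map (\<lambda>i. ([b] ! i) f) [0..<length [b]] \<in> srel (Gtempl n) (GConst c)"
        by (auto simp: srelG_const b_def)
    qed
    have GC: "GConst c \<in> gsig n" using c by (simp add: gsig_def)
    have "map (\<lambda>i. h (gar (GConst c) ! i) ([?E `` {(K, (), b)}] ! i)) [0..<length [?E `` {(K, (), b)}]]
       \<in> srel (Gtempl n) (GConst c)" by (rule hr[rule_format, OF GC mem])
    thus ?thesis by (simp add: srelG_const \<phi>_def b_def)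
  qed
  have linK: "\<phi> K b mod int n = (\<Sum>f\<in>?F K. b f * \<phi> K (restrict (\<lambda>g. if g = f then 1 else 0) (?F K))) mod int n"
    if K: "K \<in> subsets_k X k" and b: "b \<in> ?F K \<rightarrow>\<^sub>E gcar n" for K b
    by (rule lin[OF finF n1 hadd[OF K] b])
  define x where "x K f = \<phi> K (restrict (\<lambda>g. if g = f then 1 else 0) (?F K))" for K f
  have \<delta>in: "restrict (\<lambda>g. if g = f then 1 else 0) (?F K) \<in> ?F K \<rightarrow>\<^sub>E gcar n" for K f
    using one_gcar[OF n1] zero_gcar by auto
  show ?thesis unfolding affine_accepts_def
  proof (intro exI[of _ x] conjI ballI allI impI)
    fix K f assume "K \<in> subsets_k X k" "f \<in> ?F K"
    then show "x K f \<in> gcar n" unfolding x_def using hdom \<delta>in by blast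
  next
    fix K assume K: "K \<in> subsets_k X k"
    have "1 mod int n = \<phi> K (restrict (\<lambda>_. 1) (?F K)) mod int n" using hconst[OF K one_gcar[OF n1]] by simp
    also have "\<dots> = (\<Sum>f\<in>?F K. x K f) mod int n"
      using linK[OF K, of "restrict (\<lambda>_. 1) (?F K)"] one_gcar[OF n1] by (simp add: x_def)
    finally show "(\<Sum>f\<in>?F K. x K f) mod int n = 1 mod int n" by simp
  next
    fix K L g assume K: "K \<in> subsets_k X k" and LK: "L \<subset> K" and g: "g \<in> ?F L"
    define \<delta>g where "\<delta>g = restrict (\<lambda>g'. if g' = g then (1::int) else 0) (?F L)"
    define \<delta>' where "\<delta>' = restrict (\<lambda>f. \<delta>g (restrict f L)) (?F K)"
    have "((K, (), \<delta>'), (L, (), \<delta>g)) \<in> kbase ar X A k (Gtempl n)"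
      unfolding kbase_def \<delta>'_def using K LK \<delta>in[of g L] by (auto simp: \<delta>g_def)
    hence "((K, (), \<delta>'), (L, (), \<delta>g)) \<in> ?E" unfolding keq_def by blast
    hence cls: "x L g = \<phi> K \<delta>'" unfolding x_def \<phi>_def \<delta>g_def using keq_cls by metis
    have \<delta>'in: "\<delta>' \<in> ?F K \<rightarrow>\<^sub>E gcar n" using one_gcar[OF n1] zero_gcar final_restrict[of L K _ ar X A k] LK by (auto simp: \<delta>'_def \<delta>g_def)
    have \<delta>'v: "\<delta>' f = (if restrict f L = g then 1 else 0)" if "f \<in> ?F K" for f
      using that final_restrict[of L K _ ar X A k] LK by (auto simp: \<delta>'_def \<delta>g_def)
    have "x L g mod int n = \<phi> K \<delta>' mod int n" using cls by simp
    also have "\<dots> = (\<Sum>f\<in>?F K. \<delta>' f * x K f) mod int n"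
      unfolding x_def by (rule linK[OF K \<delta>'in])
    also have "(\<Sum>f\<in>?F K. \<delta>' f * x K f) = (\<Sum>f\<in>?F K. if restrict f L = g then x K f else 0)"
      by (rule sum.cong) (auto simp: \<delta>'v)
    also have "\<dots> = (\<Sum>f\<in>{f \<in> ?F K. restrict f L = g}. x K f)"
      by (rule sum.inter_filter[symmetric, OF finF])
    finally show "(\<Sum>f\<in>{f \<in> ?F K. restrict f L = g}. x K f) mod int n = x L g mod int n" by simp
  qed
qed


theorem mainTheorem11:
  fixes ar :: "'r \<Rightarrow> 't list"
    and A :: "('t, 'r, 'a) struc"
    and A' :: "('t, 'r, 'b) struc"
    and n :: nat and k :: nat
  assumes "promise_template ar A A'"
    and "k \<ge> 1"
  shows "affine_solves n k ar A A' \<longleftrightarrow> kappa_is_reduction n k ar A A'"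
proof -
  have finA: "finite_struc A" using assms(1) by (simp add: promise_template_def)
  have eq: "affine_accepts n k ar A X \<longleftrightarrow> homto (gsig n) gar (kappa ar X A k gar (Gtempl n)) (Gtempl n)"
    for X :: "('t, 'r, nat) struc"
    using accepts_homto[OF finA, of n k ar X] homto_accepts[OF finA, of n ar X k] by (rule iffI)
  have comp: "homto UNIV ar X A \<Longrightarrow> affine_accepts n k ar A X" for X :: "('t, 'r, nat) struc"
    unfolding homto_def using hom_accepts[OF finA] by (elim exE)
  show ?thesis unfolding affine_solves_def kappa_is_reduction_def
  proof (intro iffI allI impI conjI)
    fix X :: "('t, 'r, nat) struc"
    assume S: "\<forall>X :: ('t, 'r, nat) struc. wf_struc ar X \<and> finite_struc X \<and> \<not> homto UNIV ar X A' \<longrightarrow> \<not> affine_accepts n k ar A X"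
      and W: "wf_struc ar X \<and> finite_struc X"
    { assume "homto UNIV ar X A" then show "homto (gsig n) gar (kappa ar X A k gar (Gtempl n)) (Gtempl n)"
        using comp eq by blast }
    { assume "homto (gsig n) gar (kappa ar X A k gar (Gtempl n)) (Gtempl n)"
      then show "homto UNIV ar X A'" using S W eq by blast }
  next
    fix X :: "('t, 'r, nat) struc"
    assume R: "\<forall>X :: ('t, 'r, nat) struc. wf_struc ar X \<and> finite_struc X \<longrightarrow>
        (homto UNIV ar X A \<longrightarrow> homto (gsig n) gar (kappa ar X A k gar (Gtempl n)) (Gtempl n)) \<and>
        (homto (gsig n) gar (kappa ar X A k gar (Gtempl n)) (Gtempl n) \<longrightarrow> homto UNIV ar X A')"
      and W: "wf_struc ar X \<and> finite_struc X \<and> \<not> homto UNIV ar X A'"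
    show "\<not> affine_accepts n k ar A X" using R W eq by blast
  qed
qed


end
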